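(* Let $G$ be a compact Hausdorff topological group and $X$ a $G$-connected Hausdorff $G$-space, and let $x,y\in X$ with $G_x\subseteq G_y$. Then there exists a $G$-homotopy $F\colon\mathcal{O}(x)\times I\to X$ such that $F_0$ is the inclusion $\mathcal{O}(x)\hookrightarrow X$ and $F_1(\mathcal{O}(x))\subseteq\mathcal{O}(y)$.
   Context: $G_x=\{g: gx=x\}$ is the isotropy group and $\mathcal{O}(x)=Gx$ the orbit of $x$. $X$ is $G$-connected if $X^H=\{x: hx=x\ \forall h\in H\}$ is path-connected for every closed subgroup $H$. A $G$-homotopy is a $G$-equivariant map $\mathcal{O}(x)\times I\to X$, with $G$ acting trivially on $I$ and diagonally on the product. *)

theory Defs
  imports "HOL-Analysis.Analysis" "HOL-Algebra.Group"
begin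

definition topological_group :: "('g, 'b) monoid_scheme \<Rightarrow> 'g topology \<Rightarrow> bool" where
  "topological_group G TG \<longleftrightarrow>
     group G \<and> topspace TG = carrier G \<and>
     continuous_map (prod_topology TG TG) TG (\<lambda>(a, b). a \<otimes>\<^bsub>G\<^esub> b) \<and>
     continuous_map TG TG (\<lambda>a. inv\<^bsub>G\<^esub> a)"

definition G_space ::
  "('g, 'b) monoid_scheme \<Rightarrow> 'g topology \<Rightarrow> 'x topology \<Rightarrow> ('g \<Rightarrow> 'x \<Rightarrow> 'x) \<Rightarrow> bool" where
  "G_space G TG TX act \<longleftrightarrow>
     topological_group G TG \<and>
     (\<forall>g\<in>carrier G. \<forall>x\<in>topspace TX. act g x \<in> topspace TX) \<and>
     (\<forall>x\<in>topspace TX. act \<one>\<^bsub>G\<^esub> x = x) \<and>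
     (\<forall>g\<in>carrier G. \<forall>h\<in>carrier G. \<forall>x\<in>topspace TX.
         act (g \<otimes>\<^bsub>G\<^esub> h) x = act g (act h x)) \<and>
     continuous_map (prod_topology TG TX) TX (\<lambda>(g, x). act g x)"

definition isotropy :: "('g, 'b) monoid_scheme \<Rightarrow> ('g \<Rightarrow> 'x \<Rightarrow> 'x) \<Rightarrow> 'x \<Rightarrow> 'g set" where
  "isotropy G act x = {g \<in> carrier G. act g x = x}"

definition orbit :: "('g, 'b) monoid_scheme \<Rightarrow> ('g \<Rightarrow> 'x \<Rightarrow> 'x) \<Rightarrow> 'x \<Rightarrow> 'x set" where
  "orbit G act x = (\<lambda>g. act g x) ` carrier G"

definition fixed_set :: "'x topology \<Rightarrow> ('g \<Rightarrow> 'x \<Rightarrow> 'x) \<Rightarrow> 'g set \<Rightarrow> 'x set" where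
  "fixed_set TX act H = {x \<in> topspace TX. \<forall>h\<in>H. act h x = x}"

definition G_connected ::
  "('g, 'b) monoid_scheme \<Rightarrow> 'g topology \<Rightarrow> 'x topology \<Rightarrow> ('g \<Rightarrow> 'x \<Rightarrow> 'x) \<Rightarrow> bool" where
  "G_connected G TG TX act \<longleftrightarrow>
     (\<forall>H. subgroup H G \<and> closedin TG H \<longrightarrow> path_connectedin TX (fixed_set TX act H))"

definition G_homotopy ::
  "('g, 'b) monoid_scheme \<Rightarrow> 'x topology \<Rightarrow> ('g \<Rightarrow> 'x \<Rightarrow> 'x) \<Rightarrow> 'x \<Rightarrow> ('x \<times> real \<Rightarrow> 'x) \<Rightarrow> bool" where
  "G_homotopy G TX act x F \<longleftrightarrow>
     continuous_map (prod_topology (subtopology TX (orbit G act x)) (top_of_set {0..1})) TX F \<and>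
     (\<forall>g\<in>carrier G. \<forall>z\<in>orbit G act x. \<forall>t\<in>{0..1}. F (act g z, t) = act g (F (z, t)))"

end

theory Submission
  imports Defs
begin

theorem lemma3p14:
  fixes G :: "('g, 'b) monoid_scheme" and TG :: "'g topology"
    and TX :: "'x topology" and act :: "'g \<Rightarrow> 'x \<Rightarrow> 'x" and x y :: 'x
  assumes "G_space G TG TX act"
    and "compact_space TG" and "Hausdorff_space TG"
    and "Hausdorff_space TX"
    and "G_connected G TG TX act"
    and "x \<in> topspace TX" and "y \<in> topspace TX"
    and "isotropy G act x \<subseteq> isotropy G act y"
  shows "\<exists>F. G_homotopy G TX act x F \<and>
             (\<forall>z\<in>orbit G act x. F (z, 0) = z) \<and>
             (\<forall>z\<in>orbit G act x. F (z, 1) \<in> orbit G act y)"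
proof -
  have tg: "topological_group G TG" using assms(1) by (simp add: G_space_def)
  then have grp: "group G" and tsG: "topspace TG = carrier G"
    by (auto simp: topological_group_def)
  have closed_act: "\<And>g z. g \<in> carrier G \<Longrightarrow> z \<in> topspace TX \<Longrightarrow> act g z \<in> topspace TX"
    and one: "\<And>z. z \<in> topspace TX \<Longrightarrow> act \<one>\<^bsub>G\<^esub> z = z"
    and mul: "\<And>g h z. g \<in> carrier G \<Longrightarrow> h \<in> carrier G \<Longrightarrow> z \<in> topspace TX \<Longrightarrow>
                act (g \<otimes>\<^bsub>G\<^esub> h) z = act g (act h z)"
    and cact: "continuous_map (prod_topology TG TX) TX (\<lambda>(g, x). act g x)"
    using assms(1) by (auto simp: G_space_def)
  define H where "H = isotropy G act x"
  have invH: "inv\<^bsub>G\<^esub> g \<in> H" if "g \<in> H" for g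
  proof -
    have g: "g \<in> carrier G" "act g x = x" using that by (auto simp: H_def isotropy_def)
    have "act (inv\<^bsub>G\<^esub> g) x = act (inv\<^bsub>G\<^esub> g) (act g x)" using g by simp
    also have "\<dots> = act (inv\<^bsub>G\<^esub> g \<otimes>\<^bsub>G\<^esub> g) x"
      using g assms(6) grp by (simp add: mul group.inv_closed)
    also have "\<dots> = x" using g grp assms(6) by (simp add: group.l_inv one)
    finally show ?thesis using g grp by (simp add: H_def isotropy_def group.inv_closed)
  qed
  have subH: "subgroup H G"
  proof
    show "H \<subseteq> carrier G" by (auto simp: H_def isotropy_def)
    show "\<one>\<^bsub>G\<^esub> \<in> H" using assms(6) grp by (simp add: H_def isotropy_def one monoid.one_closed group.is_monoid)
    show "a \<otimes>\<^bsub>G\<^esub> b \<in> H" if "a \<in> H" "b \<in> H" for a b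
      using that assms(6) grp by (auto simp: H_def isotropy_def mul monoid.m_closed group.is_monoid)
    show "inv\<^bsub>G\<^esub> a \<in> H" if "a \<in> H" for a using invH that by blast
  qed
  have corb: "continuous_map TG TX (\<lambda>g. act g x)"
  proof -
    have "continuous_map TG (prod_topology TG TX) (\<lambda>g. (g, x))"
      using assms(6) by (simp add: continuous_map_paired)
    from continuous_map_compose[OF this cact] show ?thesis by (simp add: o_def)
  qed
  have clH: "closedin TG H"
  proof -
    have "t1_space TX" using assms(4) by (rule Hausdorff_imp_t1_space)
    then have "closedin TX {x}" using assms(6) by (simp add: t1_space_closedin_singleton)
    from closedin_continuous_map_preimage[OF corb this]
    have "closedin TG {g \<in> topspace TG. act g x \<in> {x}}" .
    moreover have "{g \<in> topspace TG. act g x \<in> {x}} = H" by (auto simp: H_def isotropy_def tsG)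
    ultimately show ?thesis by simp
  qed
  have "path_connectedin TX (fixed_set TX act H)"
    using assms(5) subH clH by (simp add: G_connected_def)
  moreover have "x \<in> fixed_set TX act H" "y \<in> fixed_set TX act H"
    using assms(6,7,8) by (auto simp: fixed_set_def H_def isotropy_def)
  ultimately obtain p where p: "pathin TX p" "p \<in> {0..1} \<rightarrow> fixed_set TX act H"
    "p 0 = x" "p 1 = y"
    unfolding path_connectedin by blast
  have pts: "p t \<in> topspace TX" if "t \<in> {0..1}" for t using p(2) that by (auto simp: fixed_set_def)
  have pfix: "act h (p t) = p t" if "h \<in> H" "t \<in> {0..1}" for h t
    using p(2) that by (auto simp: fixed_set_def)
  define F where "F = (\<lambda>(z, t). act (SOME g. g \<in> carrier G \<and> act g x = z) (p t))"
  have key: "F (act g x, t) = act g (p t)" if g: "g \<in> carrier G" and t: "t \<in> {0..1}" for g t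
  proof -
    define h where "h = (SOME h. h \<in> carrier G \<and> act h x = act g x)"
    have "h \<in> carrier G \<and> act h x = act g x" unfolding h_def by (rule someI[of _ g]) (use g in auto)
    then have h: "h \<in> carrier G" "act h x = act g x" by auto
    have ig: "inv\<^bsub>G\<^esub> g \<in> carrier G" using g grp by (simp add: group.inv_closed)
    have k: "inv\<^bsub>G\<^esub> g \<otimes>\<^bsub>G\<^esub> h \<in> carrier G" using ig h grp by (simp add: monoid.m_closed group.is_monoid)
    have "act (inv\<^bsub>G\<^esub> g \<otimes>\<^bsub>G\<^esub> h) x = act (inv\<^bsub>G\<^esub> g) (act g x)"
      using ig h assms(6) by (simp add: mul)
    also have "\<dots> = act (inv\<^bsub>G\<^esub> g \<otimes>\<^bsub>G\<^esub> g) x" using ig g assms(6) by (simp add: mul)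
    also have "\<dots> = x" using g grp assms(6) by (simp add: group.l_inv one)
    finally have "inv\<^bsub>G\<^esub> g \<otimes>\<^bsub>G\<^esub> h \<in> H" using k by (simp add: H_def isotropy_def)
    then have e: "act (inv\<^bsub>G\<^esub> g \<otimes>\<^bsub>G\<^esub> h) (p t) = p t" using pfix t by blast
    have "g \<otimes>\<^bsub>G\<^esub> (inv\<^bsub>G\<^esub> g \<otimes>\<^bsub>G\<^esub> h) = h"
      using group.inv_solve_left[OF grp k g h(1)] by simp
    then have "act h (p t) = act g (act (inv\<^bsub>G\<^esub> g \<otimes>\<^bsub>G\<^esub> h) (p t))"
      using mul[OF g k pts[OF t]] by simp
    with e have "act h (p t) = act g (p t)" by simp
    then show ?thesis by (simp add: F_def h_def)
  qed
  define Ox where "Ox = orbit G act x"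
  have Osub: "Ox \<subseteq> topspace TX" using closed_act assms(6) by (auto simp: Ox_def orbit_def)
  define q where "q = (\<lambda>(g::'g, t::real). (act g x, t))"
  define I where "I = top_of_set {0..1::real}"
  have tsI: "topspace I = {0..1}" by (simp add: I_def)
  have pI: "continuous_map I TX p" using p(1) by (simp add: I_def pathin_def)
  have cq: "continuous_map (prod_topology TG I) (prod_topology (subtopology TX Ox) I) q"
  proof -
    have "continuous_map (prod_topology TG I) TX (\<lambda>gt. act (fst gt) x)"
      using continuous_map_compose[OF continuous_map_fst corb] by (simp add: o_def)
    moreover have "(\<lambda>gt. act (fst gt) x) \<in> topspace (prod_topology TG I) \<rightarrow> Ox"
      by (auto simp: Ox_def orbit_def tsG)
    ultimately show ?thesis unfolding q_def
      by (auto simp: case_prod_unfold continuous_map_paired continuous_map_in_subtopology continuous_map_snd)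
  qed
  have surj: "q ` topspace (prod_topology TG I) = topspace (prod_topology (subtopology TX Ox) I)"
    using Osub by (auto simp: q_def Ox_def orbit_def tsG image_iff)
  have cpt: "compact_space (prod_topology TG I)"
    using assms(2) by (simp add: compact_space_prod_topology I_def compact_space_subtopology)
  have hs: "Hausdorff_space (prod_topology (subtopology TX Ox) I)"
    using assms(4) by (simp add: Hausdorff_space_prod_topology Hausdorff_space_subtopology I_def)
  have qm: "quotient_map (prod_topology TG I) (prod_topology (subtopology TX Ox) I) q"
    by (rule continuous_imp_quotient_map[OF cq cpt hs surj])
  have cFq: "continuous_map (prod_topology TG I) TX (F \<circ> q)"
  proof -
    have "continuous_map (prod_topology TG I) (prod_topology TG TX) (\<lambda>gt. (fst gt, p (snd gt)))"
      using continuous_map_compose[OF continuous_map_snd pI] continuous_map_fst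
      by (simp add: continuous_map_paired o_def) blast
    from continuous_map_compose[OF this cact]
    have "continuous_map (prod_topology TG I) TX (\<lambda>gt. act (fst gt) (p (snd gt)))"
      by (simp add: o_def)
    then show ?thesis
      by (rule continuous_map_eq) (auto simp: q_def key tsG tsI)
  qed
  have cF: "continuous_map (prod_topology (subtopology TX Ox) I) TX F"
    by (rule continuous_compose_quotient_map[OF qm cFq])
  have GH: "G_homotopy G TX act x F"
    unfolding G_homotopy_def
  proof
    show "continuous_map (prod_topology (subtopology TX (orbit G act x)) (top_of_set {0..1})) TX F"
      using cF by (simp add: Ox_def I_def)
    show "\<forall>g\<in>carrier G. \<forall>z\<in>orbit G act x. \<forall>t\<in>{0..1}. F (act g z, t) = act g (F (z, t))"
    proof (intro ballI)
      fix g z t assume g: "g \<in> carrier G" and z: "z \<in> orbit G act x" and t: "t \<in> {0..(1::real)}"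
      then obtain k where k: "k \<in> carrier G" "z = act k x" by (auto simp: orbit_def)
      have gk: "g \<otimes>\<^bsub>G\<^esub> k \<in> carrier G" using g k grp by (simp add: monoid.m_closed group.is_monoid)
      have "F (act g z, t) = F (act (g \<otimes>\<^bsub>G\<^esub> k) x, t)" using k g assms(6) by (simp add: mul)
      also have "\<dots> = act (g \<otimes>\<^bsub>G\<^esub> k) (p t)" using key gk t by blast
      also have "\<dots> = act g (act k (p t))" using mul g k pts t by blast
      also have "\<dots> = act g (F (z, t))" using key k t by simp
      finally show "F (act g z, t) = act g (F (z, t))" .
    qed
  qed
  show ?thesis
  proof (intro exI conjI ballI)
    show "G_homotopy G TX act x F" by (rule GH)
  next
    fix z assume "z \<in> orbit G act x"
    then obtain k where k: "k \<in> carrier G" "z = act k x" by (auto simp: orbit_def)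
    show "F (z, 0) = z" using key[OF k(1), of 0] k p(3) by simp
  next
    fix z assume "z \<in> orbit G act x"
    then obtain k where k: "k \<in> carrier G" "z = act k x" by (auto simp: orbit_def)
    show "F (z, 1) \<in> orbit G act y" using key[OF k(1), of 1] k p(4) by (simp add: orbit_def)
  qed
qed

end
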